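(* Let $A$ and $B$ be disjoint cubic graphs with $v(A)\equiv 0\pmod 6$ and $v(B)\equiv 0\pmod 6$, let $a\in V(A)$ with $N(a,A)=\{a_1,a_2,a_3\}$ and $b\in V(B)$ with $N(b,B)=\{b_1,b_2,b_3\}$, and let $H=Aa\sigma bB$ where $\sigma(a_i)=b_i$ for $i\in\{1,2,3\}$. Suppose $A$ has no $\Lambda$-factor containing the edge $aa_1$. Then $v(H)\equiv 4\pmod 6$ and $H-b_2$ has no $\Lambda$-factor avoiding the edge $h=a_3b_3$ (i.e. every $\Lambda$-factor of $H-b_2$ contains $h$).
   Context: Graphs are finite, undirected, without loops or multiple edges; $v(G)=|V(G)|$; $N(x,G)$ is the set of neighbours of $x$. For disjoint graphs $A,B$, vertices $a,b$ and a bijection $\sigma:N(a,A)\to N(b,B)$, $Aa\sigma bB$ is $(A-a)\cup(B-b)$ together with the new edges $\{x\sigma(x): x\in N(a,A)\}$. $H-b_2$ denotes deletion of the vertex $b_2$. A $\Lambda$-factor of a graph is a spanning subgraph each of whose components is a path on 3 vertices. *)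

theory Defs
  imports Main
begin

type_synonym 'a graph = "'a set \<times> 'a set set"

definition verts :: "'a graph \<Rightarrow> 'a set" where "verts G = fst G"
definition edges :: "'a graph \<Rightarrow> 'a set set" where "edges G = snd G"

definition graph :: "'a graph \<Rightarrow> bool" where
  "graph G \<longleftrightarrow> finite (verts G) \<and>
     (\<forall>e\<in>edges G. \<exists>x y. x \<noteq> y \<and> e = {x, y} \<and> x \<in> verts G \<and> y \<in> verts G)"

definition nbrs :: "'a graph \<Rightarrow> 'a \<Rightarrow> 'a set" where
  "nbrs G x = {y. {x, y} \<in> edges G}"

definition cubic :: "'a graph \<Rightarrow> bool" where
  "cubic G \<longleftrightarrow> graph G \<and> (\<forall>x\<in>verts G. card (nbrs G x) = 3)"

definition del_vertex :: "'a graph \<Rightarrow> 'a \<Rightarrow> 'a graph" where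
  "del_vertex G v = (verts G - {v}, {e \<in> edges G. v \<notin> e})"

definition glue :: "'a graph \<Rightarrow> 'a \<Rightarrow> ('a \<Rightarrow> 'a) \<Rightarrow> 'a \<Rightarrow> 'a graph \<Rightarrow> 'a graph" where
  "glue A a \<sigma> b B =
     ((verts A - {a}) \<union> (verts B - {b}),
      {e \<in> edges A. a \<notin> e} \<union> {e \<in> edges B. b \<notin> e} \<union> {{x, \<sigma> x} | x. x \<in> nbrs A a})"

definition component :: "'a set \<Rightarrow> 'a set set \<Rightarrow> 'a \<Rightarrow> 'a set" where
  "component V F v = {u. (\<lambda>x y. {x, y} \<in> F)\<^sup>*\<^sup>* v u}"

text \<open>A Lambda-factor: a spanning subgraph (V, F) of G each of whose components is a
  path on 3 vertices.\<close>
definition lambda_factor :: "'a graph \<Rightarrow> 'a set set \<Rightarrow> bool" where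
  "lambda_factor G F \<longleftrightarrow> F \<subseteq> edges G \<and>
     (\<forall>v\<in>verts G. \<exists>x y z. x \<noteq> y \<and> y \<noteq> z \<and> x \<noteq> z \<and>
        component (verts G) F v = {x, y, z} \<and>
        {e \<in> F. e \<subseteq> {x, y, z}} = {{x, y}, {y, z}})"

end

theory Submission
  imports Defs
begin

lemma comp_refl: "v \<in> component V F v" by (simp add: component_def)

lemma comp_step: "u \<in> component V F v \<Longrightarrow> {u,w} \<in> F \<Longrightarrow> w \<in> component V F v"
  unfolding component_def by (auto intro: rtranclp.rtrancl_into_rtrancl)

lemma comp_V: "component V F v = component W F v" by (simp add: component_def)

lemma comp_sym: "u \<in> component V F v \<Longrightarrow> v \<in> component V F u"
  unfolding component_def
proof (simp, induction rule: rtranclp_induct)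
  case base then show ?case by simp
next
  case (step y z)
  have "{z,y} \<in> F" using step(2) by (simp add: insert_commute)
  then show ?case using step(3) by (rule converse_rtranclp_into_rtranclp)
qed

lemma comp_trans: "u \<in> component V F v \<Longrightarrow> w \<in> component V F u \<Longrightarrow> w \<in> component V F v"
  unfolding component_def by (auto intro: rtranclp_trans)

lemma comp_eq: "u \<in> component V F v \<Longrightarrow> component V F u = component V F v"
  by (meson comp_sym comp_trans subsetI subset_antisym)

lemma comp_closed:
  assumes "\<And>u w. u \<in> S \<Longrightarrow> {u,w} \<in> F \<Longrightarrow> w \<in> S" "v \<in> S"
  shows "component V F v \<subseteq> S"
proof
  fix u assume "u \<in> component V F v"
  then have "(\<lambda>x y. {x, y} \<in> F)\<^sup>*\<^sup>* v u" by (simp add: component_def)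
  then show "u \<in> S"
    by (induction rule: rtranclp_induct) (use assms in auto)
qed

lemma lf_card:
  assumes "lambda_factor G F" "v \<in> verts G"
  shows "card (component (verts G) F v) = 3"
proof -
  have "\<exists>x y z. x \<noteq> y \<and> y \<noteq> z \<and> x \<noteq> z \<and> component (verts G) F v = {x, y, z} \<and>
        {e \<in> F. e \<subseteq> {x, y, z}} = {{x, y}, {y, z}}"
    using assms unfolding lambda_factor_def by (elim conjE bspec)
  then obtain x y z where "x \<noteq> y" "y \<noteq> z" "x \<noteq> z" "component (verts G) F v = {x,y,z}"
    by (elim exE conjE)
  then show ?thesis by simp
qed

lemma lf_dvd:
  assumes "lambda_factor G F" "finite S" "S \<subseteq> verts G"
    "\<forall>v\<in>S. component (verts G) F v \<subseteq> S"
  shows "3 dvd card S"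
proof -
  let ?C = "component (verts G) F ` S"
  have U: "\<Union>?C = S"
  proof
    show "\<Union>?C \<subseteq> S" using assms(4) by auto
    show "S \<subseteq> \<Union>?C" using comp_refl by fastforce
  qed
  have "3 dvd card (\<Union>?C)"
  proof (rule dvd_partition)
    show "finite (\<Union>?C)" using U assms(2) by simp
    show "\<forall>c\<in>?C. 3 dvd card c"
    proof
      fix c assume "c \<in> ?C"
      then obtain v where "v \<in> S" "c = component (verts G) F v" by blast
      then show "3 dvd card c" using lf_card[OF assms(1)] assms(3) by auto
    qed
    show "\<forall>c1\<in>?C. \<forall>c2\<in>?C. c1 \<noteq> c2 \<longrightarrow> c1 \<inter> c2 = {}"
    proof (intro ballI impI)
      fix c1 c2 assume "c1 \<in> ?C" "c2 \<in> ?C" "c1 \<noteq> c2"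
      then obtain v1 v2 where v: "c1 = component (verts G) F v1" "c2 = component (verts G) F v2" by blast
      show "c1 \<inter> c2 = {}"
      proof (rule ccontr)
        assume "c1 \<inter> c2 \<noteq> {}"
        then obtain u where "u \<in> c1" "u \<in> c2" by blast
        then have "c1 = component (verts G) F u" "c2 = component (verts G) F u"
          using comp_eq v by metis+
        then show False using \<open>c1 \<noteq> c2\<close> by simp
      qed
    qed
  qed
  then show ?thesis using U by simp
qed

lemma edge_props: "graph G \<Longrightarrow> e \<in> edges G \<Longrightarrow> \<exists>x y. x \<noteq> y \<and> e = {x,y} \<and> x \<in> verts G \<and> y \<in> verts G"
  unfolding graph_def by blast

lemma edge_props2: "graph G \<Longrightarrow> {u,w} \<in> edges G \<Longrightarrow> u \<noteq> w \<and> u \<in> verts G \<and> w \<in> verts G"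
  unfolding graph_def by (metis doubleton_eq_iff)

lemma ar2: "m = 2" if h: "3 dvd (n - 1 - m)" "n mod 6 = 0" "n \<ge> 1" "m \<ge> 1" "m \<le> (2::nat)" for n m :: nat
  using h by presburger
lemma ar3: False if h: "3 dvd (n - 1)" "n mod 6 = 0" "n \<ge> (1::nat)" for n
  using h by presburger

theorem mainTheorem10:
  fixes A B :: "'a graph" and a b a1 a2 a3 b1 b2 b3 :: 'a and \<sigma> :: "'a \<Rightarrow> 'a"
  assumes "cubic A" and "cubic B"
    and "verts A \<inter> verts B = {}"
    and "card (verts A) mod 6 = 0" and "card (verts B) mod 6 = 0"
    and "a \<in> verts A" and "nbrs A a = {a1, a2, a3}"
    and "a1 \<noteq> a2" and "a1 \<noteq> a3" and "a2 \<noteq> a3"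
    and "b \<in> verts B" and "nbrs B b = {b1, b2, b3}"
    and "b1 \<noteq> b2" and "b1 \<noteq> b3" and "b2 \<noteq> b3"
    and "\<sigma> a1 = b1" and "\<sigma> a2 = b2" and "\<sigma> a3 = b3"
    and "\<not> (\<exists>F. lambda_factor A F \<and> {a, a1} \<in> F)"
  shows "card (verts (glue A a \<sigma> b B)) mod 6 = 4 \<and>
    (\<forall>F. lambda_factor (del_vertex (glue A a \<sigma> b B) b2) F \<longrightarrow> {a3, b3} \<in> F)"
proof -
  note as = assms
  have gA: "graph A" and gB: "graph B" using as(1,2) by (auto simp: cubic_def)
  have fA: "finite (verts A)" and fB: "finite (verts B)" using gA gB by (auto simp: graph_def)
  have eA: "{a,a1} \<in> edges A" "{a,a2} \<in> edges A" "{a,a3} \<in> edges A"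
    using as(7) by (auto simp: nbrs_def set_eq_iff)
  have eB: "{b,b1} \<in> edges B" "{b,b2} \<in> edges B" "{b,b3} \<in> edges B"
    using as(12) by (auto simp: nbrs_def set_eq_iff)
  have pA1: "a \<noteq> a1 \<and> a \<in> verts A \<and> a1 \<in> verts A" by (rule edge_props2[OF gA eA(1)])
  have pA2: "a \<noteq> a2 \<and> a \<in> verts A \<and> a2 \<in> verts A" by (rule edge_props2[OF gA eA(2)])
  have pA3: "a \<noteq> a3 \<and> a \<in> verts A \<and> a3 \<in> verts A" by (rule edge_props2[OF gA eA(3)])
  have pB1: "b \<noteq> b1 \<and> b \<in> verts B \<and> b1 \<in> verts B" by (rule edge_props2[OF gB eB(1)])
  have pB2: "b \<noteq> b2 \<and> b \<in> verts B \<and> b2 \<in> verts B" by (rule edge_props2[OF gB eB(2)])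
  have pB3: "b \<noteq> b3 \<and> b \<in> verts B \<and> b3 \<in> verts B" by (rule edge_props2[OF gB eB(3)])
  have vA: "a1 \<in> verts A" "a2 \<in> verts A" "a3 \<in> verts A" "a \<noteq> a1" "a \<noteq> a2" "a \<noteq> a3"
    using pA1 pA2 pA3 by simp_all
  have vB: "b1 \<in> verts B" "b2 \<in> verts B" "b3 \<in> verts B" "b \<noteq> b1" "b \<noteq> b2" "b \<noteq> b3"
    using pB1 pB2 pB3 by simp_all
  have "card (verts A) \<noteq> 0" using fA as(6) by auto
  then have cA: "card (verts A) \<ge> 1" by simp
  have "card (verts B) \<noteq> 0" using fB as(11) by auto
  then have cB: "card (verts B) \<ge> 1" by simp
  have ar: "(nA - 1 + (nB - 1)) mod 6 = 4" if h: "nA mod 6 = 0" "nB mod 6 = 0" "nA \<ge> 1" "nB \<ge> 1" for nA nB :: nat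
  proof -
    have k: "nA = 6*(nA div 6)" using h(1) div_mult_mod_eq[of nA 6] by simp
    have l: "nB = 6*(nB div 6)" using h(2) div_mult_mod_eq[of nB 6] by simp
    obtain k' where k': "nA div 6 = Suc k'" using k h(3) by (cases "nA div 6") auto
    obtain l' where l': "nB div 6 = Suc l'" using l h(4) by (cases "nB div 6") auto
    have "nA - 1 + (nB - 1) = 6*(k'+l'+1) + 4" using k l k' l' by simp
    then show ?thesis by presburger
  qed
  have vg: "verts (glue A a \<sigma> b B) = (verts A - {a}) \<union> (verts B - {b})"
    by (simp add: glue_def verts_def)
  have "card ((verts A - {a}) \<union> (verts B - {b})) = card (verts A - {a}) + card (verts B - {b})"
    by (rule card_Un_disjoint) (use fA fB as(3) in auto)
  also have "\<dots> = (card (verts A) - 1) + (card (verts B) - 1)"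
    using fA fB as(6,11) by simp
  finally have part1: "card (verts (glue A a \<sigma> b B)) mod 6 = 4"
    using ar[OF as(4,5) cA cB] vg by simp
  define VA where "VA = verts A - {a}"
  define G where "G = del_vertex (glue A a \<sigma> b B) b2"
  have verG: "verts G = ((verts A - {a}) \<union> (verts B - {b})) - {b2}"
    by (simp add: G_def del_vertex_def glue_def verts_def)
  have VAG: "VA \<subseteq> verts G" using verG vB as(3) VA_def by auto
  have fVA: "finite VA" using fA VA_def by simp
  have cVA: "card VA = card (verts A) - 1" using fA as(6) VA_def by simp
  have nb: "nbrs A a = {a1,a2,a3}" by (rule as(7))
  have eG: "\<And>e. e \<in> edges G \<Longrightarrow> (e \<in> edges A \<and> a \<notin> e) \<or> e \<in> edges B \<or> e = {a1,b1} \<or> e = {a3,b3}"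
    unfolding G_def del_vertex_def glue_def edges_def[of "(_,_)"] using as(16-18) nb
    by (auto simp: edges_def)
  have b1A: "b1 \<notin> verts A" "b3 \<notin> verts A" using vB as(3) by auto
  have part2: "{a3, b3} \<in> F" if lf: "lambda_factor G F" for F
  proof (rule ccontr)
    assume n3: "{a3,b3} \<notin> F"
    have FG: "F \<subseteq> edges G" using lf by (simp add: lambda_factor_def)
    have step: "w \<in> VA \<or> (u = a1 \<and> w = b1)" if "{u,w} \<in> F" "u \<in> VA" for u w
    proof -
      have e: "{u,w} \<in> edges G" using that(1) FG by blast
      have uA: "u \<in> verts A" "u \<noteq> a" using that(2) VA_def by simp_all
      consider "{u,w} \<in> edges A \<and> a \<notin> {u,w}" | "{u,w} \<in> edges B" | "{u,w} = {a1,b1}" | "{u,w} = {a3,b3}"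
        using eG[OF e] by blast
      then show ?thesis
      proof cases
        case 1
        then have "w \<in> verts A" "w \<noteq> a" using edge_props2[OF gA, of u w] by auto
        then show ?thesis using VA_def by simp
      next
        case 2
        then have "u \<in> verts B" using edge_props2[OF gB, of u w] by simp
        then show ?thesis using uA as(3) by blast
      next
        case 3
        then have "u = a1 \<and> w = b1 \<or> u = b1 \<and> w = a1" by (simp add: doubleton_eq_iff)
        then show ?thesis using uA b1A by blast
      next
        case 4
        then show ?thesis using n3 that(1) by simp
      qed
    qed
    have inA: "e \<in> edges A" if "e \<in> F" "e \<subseteq> VA" for e
    proof -
      have e: "e \<in> edges G" using that FG by auto
      consider "e \<in> edges A" | "e \<in> edges B" | "e = {a1,b1}" | "e = {a3,b3}" using eG[OF e] by blast
      then show ?thesis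
      proof cases
        case 2
        then obtain x y where "e = {x,y}" "x \<in> verts B" using edge_props[OF gB] by blast
        then show ?thesis using that(2) VA_def as(3) by auto
      next
        case 3 then show ?thesis using that(2) VA_def b1A by auto
      next
        case 4 then show ?thesis using that n3 by auto
      qed simp
    qed
    have "{a1,b1} \<in> F"
    proof (rule ccontr)
      assume "{a1,b1} \<notin> F"
      then have "\<forall>v\<in>VA. component (verts G) F v \<subseteq> VA"
        using step by (metis comp_closed)
      then have "3 dvd card VA" using lf_dvd[OF lf fVA VAG] by blast
      then show False using ar3[of "card (verts A)"] cVA cA as(4) by simp
    qed
    define C where "C = component (verts G) F a1"
    have a1VA: "a1 \<in> VA" using VA_def vA by auto
    have a1C: "a1 \<in> C" using C_def comp_refl by metis
    have b1C: "b1 \<in> C" using C_def comp_step[OF a1C[unfolded C_def] \<open>{a1,b1} \<in> F\<close>] by simp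
    have cC: "card C = 3" using lf_card[OF lf] a1VA VAG C_def by auto
    have fC: "finite C" using cC card.infinite by fastforce
    have clS: "w \<in> VA - C" if "u \<in> VA - C" "{u,w} \<in> F" for u w
    proof -
      have "u \<noteq> a1" using that a1C by auto
      then have "w \<in> VA" using step that by blast
      moreover have "w \<notin> C"
      proof
        assume "w \<in> C"
        moreover have "{w,u} \<in> F" using that(2) by (simp add: insert_commute)
        ultimately have "u \<in> C" using comp_step C_def by metis
        then show False using that by auto
      qed
      ultimately show ?thesis by auto
    qed
    have compS: "component (verts G) F v \<subseteq> VA - C" if "v \<in> VA - C" for v
      by (rule comp_closed[OF clS that])
    have "3 dvd card (VA - C)"
      by (rule lf_dvd[OF lf]) (use fVA VAG compS in auto)
    moreover have "card (VA - C) = card VA - card (VA \<inter> C)"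
      by (rule card_Diff_subset_Int) (use fC in simp)
    moreover have "card (VA \<inter> C) \<le> 2"
    proof -
      have "VA \<inter> C \<subseteq> C - {b1}" using b1A VA_def by auto
      then have "card (VA \<inter> C) \<le> card (C - {b1})" using fC by (intro card_mono) auto
      then show ?thesis using cC b1C fC by simp
    qed
    moreover have "card (VA \<inter> C) \<ge> 1"
    proof -
      have "VA \<inter> C \<noteq> {}" using a1VA a1C by blast
      moreover have "finite (VA \<inter> C)" using fC by simp
      ultimately show ?thesis by (simp add: Suc_le_eq card_gt_0_iff)
    qed
    ultimately have c2: "card (VA \<inter> C) = 2" using ar2[of "card (verts A)" "card (VA \<inter> C)"] cVA cA as(4) by simp
    then have "card (VA \<inter> C - {a1}) = 1" using a1VA a1C by simp
    then obtain x where xdef: "VA \<inter> C - {a1} = {x}" using card_1_singletonE by blast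
    have xVA: "x \<in> VA" and xC: "x \<in> C" and xa1: "x \<noteq> a1" using xdef by auto
    have VAC: "VA \<inter> C = {a1,x}" using xdef a1VA a1C by auto
    have xb1: "x \<noteq> b1" using xVA b1A VA_def by auto
    have a1b1: "a1 \<noteq> b1" using a1VA b1A VA_def by auto
    have Ceq: "C = {a1,b1,x}"
    proof -
      have "{a1,b1,x} \<subseteq> C" using a1C b1C xC by auto
      moreover have "card {a1,b1,x} = 3" using xa1 xb1 a1b1 by auto
      ultimately show ?thesis using card_subset_eq[OF fC] cC by metis
    qed
    have a1x: "{a1,x} \<in> F"
    proof -
      have "\<exists>x y z. x \<noteq> y \<and> y \<noteq> z \<and> x \<noteq> z \<and> component (verts G) F a1 = {x, y, z} \<and>
        {e \<in> F. e \<subseteq> {x, y, z}} = {{x, y}, {y, z}}"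
        using lf a1VA VAG unfolding lambda_factor_def by (elim conjE bspec) auto
      then obtain x0 y0 z0 where d: "x0 \<noteq> y0" "y0 \<noteq> z0" "x0 \<noteq> z0"
        and Cx: "C = {x0,y0,z0}" and Ex: "{e \<in> F. e \<subseteq> {x0,y0,z0}} = {{x0,y0},{y0,z0}}"
        unfolding C_def by (elim exE conjE)
      have m1: "{x0,y0} \<in> {e \<in> F. e \<subseteq> {x0,y0,z0}}" using Ex by simp
      have m2: "{y0,z0} \<in> {e \<in> F. e \<subseteq> {x0,y0,z0}}" using Ex by simp
      have ne: "{x0,y0} \<noteq> {y0,z0}" using d by (auto simp: doubleton_eq_iff)
      obtain p q where pq: "p \<noteq> q" "{p,q} \<in> F" "{p,q} \<subseteq> C" "{p,q} \<noteq> {a1,b1}"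
      proof (cases "{x0,y0} = {a1,b1}")
        case True
        then have "{y0,z0} \<noteq> {a1,b1}" using ne by simp
        then show ?thesis using that[of y0 z0] m2 d Cx by simp
      next
        case False
        then show ?thesis using that[of x0 y0] m1 d Cx by simp
      qed
      have pC: "p \<in> {a1,b1,x}" "q \<in> {a1,b1,x}" using pq(3) Ceq by auto
      have "{p,q} = {a1,x} \<or> {p,q} = {b1,x}" using pC pq(1) pq(4) by (auto simp: doubleton_eq_iff)
      moreover have "{b1,x} \<notin> F"
      proof
        assume "{b1,x} \<in> F" then have "{x,b1} \<in> F" by (simp add: insert_commute)
        then have "b1 \<in> VA \<or> (x = a1 \<and> b1 = b1)" using xVA by (rule step)
        moreover have "b1 \<notin> VA" using b1A VA_def by simp
        ultimately show False using xa1 by simp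
      qed
      ultimately show ?thesis using pq(2) by metis
    qed
    define F' where "F' = {e \<in> F. e \<subseteq> VA} \<union> {{a,a1}}"
    have aVA: "a \<notin> VA" using VA_def by simp
    have F'A: "F' \<subseteq> edges A" using inA eA F'_def by auto
    have a1xF': "{a1,x} \<in> F'" using a1x a1VA xVA F'_def by auto
    have aa1F': "{a,a1} \<in> F'" using F'_def by auto
    have lfA: "lambda_factor A F'"
      unfolding lambda_factor_def
    proof (intro conjI ballI)
      show "F' \<subseteq> edges A" by (rule F'A)
      fix v assume vA': "v \<in> verts A"
      show "\<exists>x y z. x \<noteq> y \<and> y \<noteq> z \<and> x \<noteq> z \<and> component (verts A) F' v = {x, y, z} \<and>
             {e \<in> F'. e \<subseteq> {x, y, z}} = {{x, y}, {y, z}}"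
      proof (cases "v \<in> {a,a1,x}")
        case True
        have sub: "component (verts A) F' v \<subseteq> {a,a1,x}"
        proof (rule comp_closed[OF _ True])
          fix u w assume u: "u \<in> {a,a1,x}" and uw: "{u,w} \<in> F'"
          show "w \<in> {a,a1,x}"
          proof (cases "{u,w} = {a,a1}")
            case True then show ?thesis by (auto simp: doubleton_eq_iff)
          next
            case False
            then have uwF: "{u,w} \<in> F" "{u,w} \<subseteq> VA" using uw F'_def by auto
            then have "u \<in> C" using u aVA a1C xC by auto
            then have "w \<in> C" using comp_step uwF(1) C_def by metis
            then show ?thesis using uwF(2) Ceq b1A VA_def by auto
          qed
        qed
        have a1v: "a1 \<in> component (verts A) F' v"
          using True comp_refl comp_step aa1F' by (metis insert_commute insertE a1xF' singletonD)
        have "{a,a1,x} \<subseteq> component (verts A) F' a1"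
          using comp_refl comp_step aa1F' a1xF' by (metis insert_commute insert_subset empty_subsetI)
        then have sup: "{a,a1,x} \<subseteq> component (verts A) F' v" using comp_eq[OF a1v] by simp
        have E: "{e \<in> F'. e \<subseteq> {a,a1,x}} = {{a,a1},{a1,x}}"
        proof
          show "{{a,a1},{a1,x}} \<subseteq> {e \<in> F'. e \<subseteq> {a,a1,x}}" using aa1F' a1xF' by auto
          show "{e \<in> F'. e \<subseteq> {a,a1,x}} \<subseteq> {{a,a1},{a1,x}}"
          proof
            fix e assume e: "e \<in> {e \<in> F'. e \<subseteq> {a,a1,x}}"
            show "e \<in> {{a,a1},{a1,x}}"
            proof (cases "e = {a,a1}")
              case False
              then have eF: "e \<subseteq> VA" "e \<in> edges A" using e F'_def F'A by auto
              then obtain p q where "p \<noteq> q" "e = {p,q}" using edge_props[OF gA] by blast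
              then show ?thesis using eF e aVA by auto
            qed simp
          qed
        qed
        have ceq: "component (verts A) F' v = {a,a1,x}" using sub sup by (rule subset_antisym)
        have d1: "a \<noteq> a1" using vA(4) .
        have d2: "a1 \<noteq> x" using xa1 by simp
        have d3: "a \<noteq> x" using xVA aVA by metis
        show ?thesis
          by (rule exI[of _ a], rule exI[of _ a1], rule exI[of _ x]) (intro conjI d1 d2 d3 ceq E)
      next
        case False
        then have vS: "v \<in> VA - C" using vA' VA_def VAC by auto
        have vG: "v \<in> verts G" using vS VAG by auto
        have cS: "component (verts G) F v \<subseteq> VA - C" using compS vS by blast
        have ceq: "component (verts A) F' v = component (verts G) F v"
        proof
          show "component (verts A) F' v \<subseteq> component (verts G) F v"
          proof
            fix u assume "u \<in> component (verts A) F' v"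
            then have "(\<lambda>x y. {x, y} \<in> F')\<^sup>*\<^sup>* v u" by (simp add: component_def)
            then have "u \<in> component (verts G) F v"
            proof (induction rule: rtranclp_induct)
              case base then show ?case by (rule comp_refl)
            next
              case (step y z)
              have yS: "y \<in> VA - C" using step(3) cS by blast
              have "{y,z} \<noteq> {a,a1}" using yS aVA a1C by (auto simp: doubleton_eq_iff)
              then have "{y,z} \<in> F" using step(2) F'_def by auto
              then show ?case using comp_step step(3) by metis
            qed
            then show "u \<in> component (verts G) F v" .
          qed
          show "component (verts G) F v \<subseteq> component (verts A) F' v"
          proof
            fix u assume "u \<in> component (verts G) F v"
            then have "(\<lambda>x y. {x, y} \<in> F)\<^sup>*\<^sup>* v u" by (simp add: component_def)
            then show "u \<in> component (verts A) F' v"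
            proof (induction rule: rtranclp_induct)
              case base then show ?case by (rule comp_refl)
            next
              case (step y z)
              have yc: "y \<in> component (verts G) F v" using step(1) by (simp add: component_def)
              have zc: "z \<in> component (verts G) F v" using comp_step[OF yc step(2)] .
              have "{y,z} \<in> F'" using yc zc cS step(2) F'_def by auto
              then show ?case using comp_step step(3) by metis
            qed
          qed
        qed
        obtain x0 y0 z0 where d: "x0 \<noteq> y0" "y0 \<noteq> z0" "x0 \<noteq> z0"
          and Cx: "component (verts G) F v = {x0,y0,z0}" and Ex: "{e \<in> F. e \<subseteq> {x0,y0,z0}} = {{x0,y0},{y0,z0}}"
          using lf vG unfolding lambda_factor_def by blast
        have sVA: "{x0,y0,z0} \<subseteq> VA" using Cx cS by auto
        have "{e \<in> F'. e \<subseteq> {x0,y0,z0}} = {e \<in> F. e \<subseteq> {x0,y0,z0}}"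
          using sVA aVA F'_def by auto
        then show ?thesis using d Cx Ex ceq by metis
      qed
    qed
    then show False using as(19) aa1F' by blast
  qed
  show ?thesis using part1 part2 G_def by blast
qed

end
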